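(* Let $f:\mathbb{R}^n\to\mathbb{R}^n$ and let $x^*\in\mathbb{R}^n$ satisfy $f(x^* )=0$. Assume $f$ is continuously differentiable in a neighborhood $B_1(x^* )$ of $x^*$ and that the Jacobian $J_f(x^* )$ is nonsingular. Consider a nonlinear Krylov (nlKrylov) iteration as described in the context, generating iterates $x_{j+1}=x_j+P_jy_j$ with $y_j=-V_j^Tf(x_j)$, where $V_j^TV_j=I_{n_j}$. Define $W_j=J_f(x_j)P_j-V_j$, $$\mu_j=\frac{\|W_jy_j\|}{\|f(x_j)\|},\qquad \eta_j=\frac{\|f(x_j)+V_jy_j\|}{\|f(x_j)\|},$$ and suppose there is a constant $c$ with $0<c<1$ such that for all $j$, $$c_j:=\mu_j+\eta_j\le c<1.$$ Then there exists a neighborhood $B_0(x^* )$ of $x^*$ such that for every initial guess $x_0\in B_0(x^* )$ the nlKrylov iterates $\{x_j\}_j$ converge to $x^*$.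
   Context: Norms are Euclidean 2-norms and $J_f(x)$ denotes the Jacobian of $f$ at $x$. An nlKrylov method solves $f(x)=0$ as follows: at iteration $j$ it holds two matrices $P_j,V_j\in\mathbb{R}^{n\times n_j}$ (search directions and approximations of $J_f(x_j)P_j$, respectively, built from previous iterates, Jacobian-vector products and an inner linear solver applied to $J_f(x_j)\hat p=-f(x_j)$), where the columns of $V_j$ are orthonormal, i.e. $V_j^TV_j=I_{n_j}$. With residual $r_j=-f(x_j)$, the method sets $y_j=V_j^Tr_j=-V_j^Tf(x_j)$ and updates $x_{j+1}=x_j+P_jy_j$. The matrix $W_j=J_f(x_j)P_j-V_j$ measures the mismatch between $V_j$ and $J_f(x_j)P_j$. *)

theory Defs
  imports "HOL-Analysis.Analysis"
begin

definition jacobian :: "(real^'n \<Rightarrow> real^'m) \<Rightarrow> real^'n \<Rightarrow> real^'n^'m" where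
  "jacobian f x = matrix (frechet_derivative f (at x))"

text \<open>An n x k matrix is represented by its k columns A 0, ..., A (k-1).
  colmul A k y is the matrix-vector product A y (y in R^k, entries y 0 .. y (k-1)),
  coltrans A k v is the vector A^T v in R^k (entries beyond k set to 0).\<close>
definition colmul :: "(nat \<Rightarrow> real^'n) \<Rightarrow> nat \<Rightarrow> (nat \<Rightarrow> real) \<Rightarrow> real^'n" where
  "colmul A k y = (\<Sum>i<k. y i *\<^sub>R A i)"

definition coltrans :: "(nat \<Rightarrow> real^'n) \<Rightarrow> nat \<Rightarrow> real^'n \<Rightarrow> (nat \<Rightarrow> real)" where
  "coltrans A k v = (\<lambda>i. if i < k then A i \<bullet> v else 0)"

definition orthonormal_cols :: "(nat \<Rightarrow> real^'n) \<Rightarrow> nat \<Rightarrow> bool" where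
  "orthonormal_cols A k \<longleftrightarrow> (\<forall>i<k. \<forall>l<k. A i \<bullet> A l = (if i = l then 1 else 0))"

end

theory Submission
  imports Defs
begin

lemma mv_bound:
  fixes M :: "real^'n^'m"
  shows "norm (M *v v) \<le> real CARD('m) * norm M * norm v"
proof -
  have "norm (M *v v) \<le> (\<Sum>i\<in>UNIV. \<bar>(M *v v) $ i\<bar>)" by (rule norm_le_l1_cart)
  also have "\<dots> \<le> (\<Sum>i\<in>(UNIV::'m set). norm M * norm v)"
  proof (rule sum_mono)
    fix i
    have "\<bar>(M *v v) $ i\<bar> = \<bar>M$i \<bullet> v\<bar>" by (simp add: matrix_mult_dot)
    also have "\<dots> \<le> norm (M$i) * norm v" by (rule Cauchy_Schwarz_ineq2)
    also have "\<dots> \<le> norm M * norm v" by (rule mult_right_mono[OF Finite_Cartesian_Product.norm_nth_le norm_ge_zero])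
    finally show "\<bar>(M *v v) $ i\<bar> \<le> norm M * norm v" .
  qed
  also have "\<dots> = real CARD('m) * norm M * norm v" by simp
  finally show ?thesis .
qed

lemma inv_bound:
  fixes A :: "real^'n^'n"
  assumes "invertible A"
  obtains K where "K > 0" "\<And>v. norm v \<le> K * norm (A *v v)"
proof -
  obtain B where B: "B ** A = mat 1" using assms unfolding invertible_def by auto
  have "norm v \<le> (real CARD('n) * norm B + 1) * norm (A *v v)" for v
  proof -
    have "v = B *v (A *v v)" by (simp add: matrix_vector_mul_assoc B)
    then have "norm v \<le> real CARD('n) * norm B * norm (A *v v)" by (metis mv_bound)
    also have "\<dots> \<le> (real CARD('n) * norm B + 1) * norm (A *v v)" by (simp add: distrib_right)
    finally show ?thesis .
  qed
  moreover have "real CARD('n) * norm B + 1 > 0" by (simp add: add_nonneg_pos)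
  ultimately show ?thesis using that by blast
qed

lemma jac_eq: "jacobian f x = Cartesian_Euclidean_Space.jacobian f (at x)"
  by (simp add: jacobian_def Cartesian_Euclidean_Space.jacobian_def)


lemma step_est:
  fixes A J :: "real^'n^'n" and F e s :: "real^'n"
  assumes Kpos: "K > 0" and Kb: "\<And>v. norm v \<le> K * norm (A *v v)"
    and gpos: "\<gamma> > 0" and eps: "K * \<gamma> \<le> 1/2" and c0: "0 \<le> c" and c1: "c \<le> 1" and ct: "c + 8 * (K * \<gamma>) \<le> t"
    and dF: "norm (F - A *v e) \<le> \<gamma> * norm e"
    and dJ: "\<And>v. norm ((A - J) *v v) \<le> \<gamma> * norm v"
    and r: "norm (F + J *v s) \<le> c * norm F"
  shows "norm (A *v (e + s)) \<le> t * norm (A *v e)"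
proof -
  define \<epsilon> where "\<epsilon> = K * \<gamma>"
  define a where "a = norm (A *v e)"
  have e0: "\<epsilon> \<ge> 0" using Kpos gpos by (simp add: \<epsilon>_def)
  have ne: "\<gamma> * norm e \<le> \<epsilon> * a"
    using mult_left_mono[OF Kb[of e], of \<gamma>] gpos by (simp add: \<epsilon>_def a_def mult_ac)
  have "F = (F - A *v e) + A *v e" by simp
  then have "norm F \<le> norm (F - A *v e) + a" unfolding a_def by (metis norm_triangle_ineq)
  then have NF: "norm F \<le> (1 + \<epsilon>) * a" using dF ne by (simp add: distrib_right)
  have "norm ((F + J *v s) - F) \<le> norm (F + J *v s) + norm F" by (rule norm_triangle_ineq4)
  then have "norm (J *v s) \<le> c * norm F + norm F" using r by simp
  also have "\<dots> \<le> 2 * norm F"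
    using mult_right_mono[OF c1 norm_ge_zero[of F]] by simp
  finally have nJs: "norm (J *v s) \<le> 2 * norm F" .
  have "A *v s = J *v s + (A - J) *v s" by (simp add: matrix_vector_mult_diff_rdistrib)
  then have "norm (A *v s) \<le> norm (J *v s) + norm ((A - J) *v s)" by (metis norm_triangle_ineq)
  then have nAs: "norm (A *v s) \<le> 2 * norm F + \<gamma> * norm s" using nJs dJ[of s] by linarith
  have "norm s \<le> K * (2 * norm F + \<gamma> * norm s)"
    using Kb[of s] mult_left_mono[OF nAs, of K] Kpos by linarith
  then have "norm s \<le> 2 * K * norm F + \<epsilon> * norm s" by (simp add: \<epsilon>_def algebra_simps)
  then have "(1 - \<epsilon>) * norm s \<le> 2 * K * norm F" by (simp add: algebra_simps)
  moreover have "(1/2) * norm s \<le> (1 - \<epsilon>) * norm s"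
    using eps \<epsilon>_def by (intro mult_right_mono) auto
  ultimately have "norm s \<le> 4 * K * norm F" by linarith
  then have ns: "\<gamma> * norm s \<le> 4 * \<epsilon> * norm F"
    using gpos mult_left_mono[of "norm s" "4 * K * norm F" \<gamma>] by (simp add: \<epsilon>_def mult_ac)
  have eqA: "A *v (e + s) = - (F - A *v e) + (F + J *v s) + (A - J) *v s"
    by (simp add: matrix_vector_right_distrib matrix_vector_mult_diff_rdistrib)
  have "norm (- (F - A *v e) + (F + J *v s) + (A - J) *v s) \<le> norm (- (F - A *v e) + (F + J *v s)) + norm ((A - J) *v s)"
    by (rule norm_triangle_ineq)
  moreover have "norm (- (F - A *v e) + (F + J *v s)) \<le> norm (F - A *v e) + norm (F + J *v s)"
    using norm_triangle_ineq[of "- (F - A *v e)" "F + J *v s"] by (simp only: norm_minus_cancel)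
  ultimately have "norm (A *v (e + s)) \<le> norm (F - A *v e) + norm (F + J *v s) + norm ((A - J) *v s)"
    unfolding eqA by linarith
  also have "\<dots> \<le> \<epsilon> * a + c * ((1 + \<epsilon>) * a) + 4 * \<epsilon> * ((1 + \<epsilon>) * a)"
  proof -
    have "c * norm F \<le> c * ((1 + \<epsilon>) * a)" using NF c0 by (rule mult_left_mono)
    moreover have "4 * \<epsilon> * norm F \<le> 4 * \<epsilon> * ((1 + \<epsilon>) * a)" using NF e0 by (intro mult_left_mono) auto
    ultimately show ?thesis using dF ne r dJ[of s] ns by linarith
  qed
  also have "\<dots> \<le> t * a"
  proof -
    have a0: "a \<ge> 0" by (simp add: a_def)
    have "\<epsilon> + c * (1 + \<epsilon>) + 4 * \<epsilon> * (1 + \<epsilon>) \<le> t"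
    proof -
      have "c * \<epsilon> \<le> \<epsilon>" using mult_right_mono[OF c1 e0] by simp
      moreover have "\<epsilon> * \<epsilon> \<le> \<epsilon> / 2" using mult_right_mono[OF eps[folded \<epsilon>_def] e0] by simp
      ultimately show ?thesis using ct \<epsilon>_def by (simp add: algebra_simps)
    qed
    from mult_right_mono[OF this a0] show ?thesis by (simp add: algebra_simps)
  qed
  finally show ?thesis unfolding a_def .
qed


lemma resid_bound:
  fixes J :: "real^'n^'n" and F :: "real^'n" and P V :: "nat \<Rightarrow> real^'n"
  assumes "norm (J *v colmul P k (coltrans V k (- F)) - colmul V k (coltrans V k (- F))) / norm F
             + norm (F + colmul V k (coltrans V k (- F))) / norm F \<le> c"
  shows "norm (F + J *v colmul P k (coltrans V k (- F))) \<le> c * norm F"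
proof (cases "F = 0")
  case True
  have "coltrans V k (- F) = (\<lambda>i. 0)" by (auto simp: True coltrans_def fun_eq_iff)
  then have "colmul P k (coltrans V k (- F)) = 0" by (simp add: colmul_def)
  then show ?thesis by (simp add: True)
next
  case False
  define y where "y = coltrans V k (- F)"
  define a where "a = norm (J *v colmul P k y - colmul V k y)"
  define b where "b = norm (F + colmul V k y)"
  have nF: "norm F > 0" using False by simp
  have "a / norm F + b / norm F \<le> c" using assms by (simp add: a_def b_def y_def)
  then have "(a + b) / norm F \<le> c" by (simp add: add_divide_distrib)
  then have ab: "a + b \<le> c * norm F" using nF by (simp add: divide_le_eq)
  have "F + J *v colmul P k y = (F + colmul V k y) + (J *v colmul P k y - colmul V k y)" by simp
  then have "norm (F + J *v colmul P k y) \<le> b + a" unfolding a_def b_def by (metis norm_triangle_ineq)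
  then show ?thesis using ab by (simp add: y_def)
qed

theorem theorem5p1:
  fixes f :: "real^'n \<Rightarrow> real^'n" and xs :: "real^'n" and r c :: real
  assumes root: "f xs = 0"
    and r_pos: "r > 0"
    and diff: "\<forall>x\<in>ball xs r. f differentiable (at x)"
    and cont: "continuous_on (ball xs r) (jacobian f)"
    and nonsing: "invertible (jacobian f xs)"
    and c_pos: "0 < c" and c_lt: "c < 1"
  shows "\<exists>\<delta>>0. \<forall>(x :: nat \<Rightarrow> real^'n) (P :: nat \<Rightarrow> nat \<Rightarrow> real^'n)
                 (V :: nat \<Rightarrow> nat \<Rightarrow> real^'n) (m :: nat \<Rightarrow> nat).
      x 0 \<in> ball xs \<delta> \<and>
      (\<forall>j. let y = coltrans (V j) (m j) (- f (x j)) in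
             orthonormal_cols (V j) (m j) \<and>
             x (Suc j) = x j + colmul (P j) (m j) y \<and>
             norm (jacobian f (x j) *v colmul (P j) (m j) y - colmul (V j) (m j) y) / norm (f (x j))
             + norm (f (x j) + colmul (V j) (m j) y) / norm (f (x j)) \<le> c)
      \<longrightarrow> x \<longlonglongrightarrow> xs"
proof -
  define A where "A = jacobian f xs"
  obtain K where Kpos: "K > 0" and Kb: "\<And>v. norm v \<le> K * norm (A *v v)"
    using inv_bound[OF nonsing] unfolding A_def by blast
  define \<epsilon> where "\<epsilon> = min (1/2) ((1 - c) / 16)"
  define \<gamma> where "\<gamma> = \<epsilon> / K"
  define t where "t = (1 + c) / 2"
  have epos: "\<epsilon> > 0" using c_lt by (simp add: \<epsilon>_def)
  have gpos: "\<gamma> > 0" using epos Kpos by (simp add: \<gamma>_def)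
  have Kg: "K * \<gamma> = \<epsilon>" using Kpos by (simp add: \<gamma>_def)
  have eps: "K * \<gamma> \<le> 1/2" using Kg by (simp add: \<epsilon>_def)
  have "\<epsilon> \<le> (1 - c) / 16" unfolding \<epsilon>_def by (rule min.cobounded2)
  then have ct: "c + 8 * (K * \<gamma>) \<le> t" using Kg by (simp add: t_def)
  have t0: "0 \<le> t" "t < 1" using c_pos c_lt by (auto simp: t_def)
  have xs_in: "xs \<in> ball xs r" using r_pos by simp
  have "(f has_derivative (\<lambda>h. A *v h)) (at xs)"
    using diff xs_in jacobian_works unfolding A_def jac_eq by blast
  then obtain \<rho>1 where \<rho>1: "\<rho>1 > 0"
    and d1: "\<And>y. norm (y - xs) < \<rho>1 \<Longrightarrow> norm (f y - f xs - A *v (y - xs)) \<le> \<gamma> * norm (y - xs)"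
    unfolding has_derivative_at_alt using gpos by blast
  have "continuous (at xs) (jacobian f)"
    using continuous_on_interior[OF cont] xs_in by simp
  moreover have "\<gamma> / real CARD('n) > 0" using gpos by simp
  ultimately obtain \<rho>2 where \<rho>2: "\<rho>2 > 0"
    and d2: "\<And>y. dist y xs < \<rho>2 \<Longrightarrow> dist (jacobian f y) A < \<gamma> / real CARD('n)"
    unfolding continuous_at_eps_delta A_def by blast
  have dJ: "norm ((A - jacobian f y) *v v) \<le> \<gamma> * norm v" if "norm (y - xs) < \<rho>2" for y v
  proof -
    have "norm (A - jacobian f y) < \<gamma> / real CARD('n)"
      using d2[of y] that by (simp add: dist_norm norm_minus_commute)
    then have "real CARD('n) * norm (A - jacobian f y) \<le> \<gamma>"
      by (simp add: field_simps)
    then have "real CARD('n) * norm (A - jacobian f y) * norm v \<le> \<gamma> * norm v"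
      by (rule mult_right_mono) simp
    then show ?thesis using mv_bound[of "A - jacobian f y" v] by linarith
  qed
  define \<rho> where "\<rho> = min \<rho>1 \<rho>2"
  define LA where "LA = real CARD('n) * norm A"
  have LA0: "LA \<ge> 0" by (simp add: LA_def)
  define \<delta> where "\<delta> = \<rho> / (K * LA + 1)"
  have KL: "K * LA + 1 > 0" using Kpos LA0 by (simp add: add_nonneg_pos)
  have \<delta>pos: "\<delta> > 0" using \<rho>1 \<rho>2 KL by (simp add: \<delta>_def \<rho>_def)
  show ?thesis
  proof (intro exI[of _ \<delta>] conjI allI impI \<delta>pos)
    fix x :: "nat \<Rightarrow> real^'n" and P V :: "nat \<Rightarrow> nat \<Rightarrow> real^'n" and m :: "nat \<Rightarrow> nat"
    assume H: "x 0 \<in> ball xs \<delta> \<and>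
      (\<forall>j. let y = coltrans (V j) (m j) (- f (x j)) in
             orthonormal_cols (V j) (m j) \<and>
             x (Suc j) = x j + colmul (P j) (m j) y \<and>
             norm (jacobian f (x j) *v colmul (P j) (m j) y - colmul (V j) (m j) y) / norm (f (x j))
             + norm (f (x j) + colmul (V j) (m j) y) / norm (f (x j)) \<le> c)"
    define e where "e j = x j - xs" for j
    define a0 where "a0 = norm (A *v e 0)"
    have e0: "norm (e 0) < \<delta>" using H by (simp add: e_def dist_norm norm_minus_commute)
    have a0b: "a0 \<le> LA * norm (e 0)" using mv_bound[of A "e 0"] by (simp add: a0_def LA_def)
    have small: "norm (e j) < \<rho>" if "norm (A *v e j) \<le> a0" for j
    proof -
      have "norm (e j) \<le> K * a0" using Kb[of "e j"] mult_left_mono[OF that, of K] Kpos by linarith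
      also have "\<dots> \<le> K * (LA * norm (e 0))" using a0b Kpos by (simp add: mult_left_mono)
      also have "\<dots> < (K * LA + 1) * \<delta>"
      proof -
        have "K * (LA * norm (e 0)) \<le> (K * LA) * \<delta>"
          using e0 Kpos LA0 by (simp add: mult_left_mono mult.assoc less_imp_le)
        then show ?thesis using \<delta>pos by (simp add: distrib_right)
      qed
      also have "\<dots> = \<rho>" using KL by (simp add: \<delta>_def)
      finally show ?thesis .
    qed
    have main: "norm (A *v e j) \<le> t ^ j * a0" for j
    proof (induction j)
      case 0
      then show ?case by (simp add: a0_def)
    next
      case (Suc j)
      define y where "y = coltrans (V j) (m j) (- f (x j))"
      define s where "s = colmul (P j) (m j) y"
      have Hj: "x (Suc j) = x j + s"
        "norm (jacobian f (x j) *v colmul (P j) (m j) y - colmul (V j) (m j) y) / norm (f (x j))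
             + norm (f (x j) + colmul (V j) (m j) y) / norm (f (x j)) \<le> c"
        using H unfolding s_def y_def Let_def by blast+
      have r: "norm (f (x j) + jacobian f (x j) *v s) \<le> c * norm (f (x j))"
        using resid_bound[OF Hj(2)[unfolded y_def]] by (simp add: s_def y_def)
      have "t ^ j \<le> 1" using t0 by (simp add: power_le_one)
      then have "t ^ j * a0 \<le> a0" using mult_right_mono[of "t^j" 1 a0] by (simp add: a0_def)
      then have sm: "norm (e j) < \<rho>" using Suc.IH by (intro small) linarith
      have dF: "norm (f (x j) - A *v e j) \<le> \<gamma> * norm (e j)"
        using d1[of "x j"] sm root by (simp add: e_def \<rho>_def)
      have dJj: "\<And>v. norm ((A - jacobian f (x j)) *v v) \<le> \<gamma> * norm v"
        using dJ sm by (simp add: e_def \<rho>_def)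
      have "norm (A *v (e j + s)) \<le> t * norm (A *v e j)"
        by (rule step_est[OF Kpos Kb gpos eps _ _ ct dF dJj r]) (use c_pos c_lt in auto)
      moreover have "e (Suc j) = e j + s" using Hj(1) by (simp add: e_def)
      ultimately have "norm (A *v e (Suc j)) \<le> t * norm (A *v e j)" by simp
      also have "\<dots> \<le> t * (t ^ j * a0)" using Suc.IH t0 by (simp add: mult_left_mono)
      finally show ?case by simp
    qed
    have bnd: "norm (x j - xs) \<le> K * a0 * t ^ j" for j
    proof -
      have "norm (e j) \<le> K * norm (A *v e j)" by (rule Kb)
      also have "\<dots> \<le> K * (t ^ j * a0)" using main[of j] Kpos by (simp add: mult_left_mono)
      finally show ?thesis by (simp add: e_def mult_ac)
    qed
    have "(\<lambda>j. K * a0 * t ^ j) \<longlonglongrightarrow> 0"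
      using t0 by (intro tendsto_mult_right_zero LIMSEQ_power_zero) simp
    then have "(\<lambda>j. x j - xs) \<longlonglongrightarrow> 0"
      by (rule Lim_null_comparison[rotated]) (use bnd in simp)
    then show "x \<longlonglongrightarrow> xs" by (simp add: LIM_zero_iff)
  qed
qed

end
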